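(* A set of atoms $M$ is an answer set by reduct of a basic program $P$ if and only if $M$ is a weakly well-supported model of $P$.
   Context: Fix a countable set $\mathcal{A}$ of atoms. A c-atom is $A=(A_d,A_c)$, $A_d\subseteq\mathcal{A}$, $A_c\subseteq 2^{A_d}$; $(\{p\},\{\{p\}\})$ is elementary; $\bot=(\mathcal{A},\emptyset)$. Rule: $A\leftarrow A_1,\dots,A_k,\mathit{not}\,A_{k+1},\dots,\mathit{not}\,A_n$, $head(r)=A$, $pos(r)=\{A_1,..,A_k\}$, $neg(r)=\{A_{k+1},..,A_n\}$. Program = set of rules; positive if no naf-literals; basic if every head is elementary or $\bot$. $S\models A$ iff $S\cap A_d\in A_c$; $S\models\mathit{not}\,A$ iff $S\cap A_d\notin A_c$; $S\models body(r)$ if all body literals hold; rule satisfied if head holds or body fails; model = satisfies all rules. Conditional satisfaction: $S\models_M A$ iff $S\models A$ and every $I$ with $S\cap A_d\subseteq I\subseteq M\cap A_d$ lies in $A_c$. For positive basic $P$: $T_P(S,M)=\{a\mid \exists r\in P,\ head(r)=(\{a\},\{\{a\}\}),\ S\models_M B\ \forall B\in pos(r)\}$, $T^0_P(\emptyset,M)=\emptyset$, $T^{i+1}_P(\emptyset,M)=T_P(T^i_P(\emptyset,M),M)$, $T^\infty_P(\emptyset,M)=\bigcup_i T^i_P(\emptyset,M)$; a model $M$ is an answer set iff $M=T^\infty_P(\emptyset,M)$. Reduct $P^M$: delete rules with some $\mathit{not}\,A$ in the body where $M\models A$, then delete remaining naf-literals; $M$ is an answer set by reduct of $P$ iff it is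 an answer set of $P^M$. Level mappings: for a set $M$ and $\ell:M\to\{1,2,\dots\}$, put $H(X)=\max\{\ell(a)\mid a\in X\}$ for $X\subseteq M$ (with $\max\emptyset=0$), and $L(A,M)=\min\{H(X)\mid X\in A_c,\ X\subseteq M,\ X\models_M A\}$, undefined if this set is empty. A model $M$ of basic $P$ is weakly well-supported iff there is such an $\ell$ such that for each $b\in M$ some $r\in P$ has $head(r)=(\{b\},\{\{b\}\})$, $M\models body(r)$, and for every $A\in pos(r)$, $L(A,M)$ is defined and $\ell(b)>L(A,M)$. *)

theory Defs
  imports Main "HOL-Library.Countable" "HOL-Library.Extended_Nat"
begin

text \<open>Atoms are the elements of a countable type 'a (the set of atoms is UNIV).
A c-atom is a pair (A_d, A_c).\<close>

type_synonym 'a catom = "'a set \<times> 'a set set"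

definition is_catom :: "'a catom \<Rightarrow> bool" where
  "is_catom A \<longleftrightarrow> snd A \<subseteq> Pow (fst A)"

definition elem :: "'a \<Rightarrow> 'a catom" where
  "elem p = ({p}, {{p}})"

definition cbot :: "'a catom" where
  "cbot = (UNIV, {})"

datatype 'a rule = Rule (head: "'a catom") (pos: "'a catom list") (neg: "'a catom list")

type_synonym 'a program = "'a rule set"

definition rule_catoms :: "'a rule \<Rightarrow> 'a catom set" where
  "rule_catoms r = insert (head r) (set (pos r) \<union> set (neg r))"

definition positive :: "'a program \<Rightarrow> bool" where
  "positive P \<longleftrightarrow> (\<forall>r\<in>P. neg r = [])"

definition basic :: "'a program \<Rightarrow> bool" where
  "basic P \<longleftrightarrow> (\<forall>r\<in>P. (\<exists>p. head r = elem p) \<or> head r = cbot)"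

definition sat :: "'a set \<Rightarrow> 'a catom \<Rightarrow> bool" where
  "sat S A \<longleftrightarrow> S \<inter> fst A \<in> snd A"

definition body_sat :: "'a set \<Rightarrow> 'a rule \<Rightarrow> bool" where
  "body_sat S r \<longleftrightarrow> (\<forall>A\<in>set (pos r). sat S A) \<and> (\<forall>A\<in>set (neg r). \<not> sat S A)"

definition rule_sat :: "'a set \<Rightarrow> 'a rule \<Rightarrow> bool" where
  "rule_sat S r \<longleftrightarrow> sat S (head r) \<or> \<not> body_sat S r"

definition is_model :: "'a set \<Rightarrow> 'a program \<Rightarrow> bool" where
  "is_model M P \<longleftrightarrow> (\<forall>r\<in>P. rule_sat M r)"

definition csat :: "'a set \<Rightarrow> 'a set \<Rightarrow> 'a catom \<Rightarrow> bool" where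
  "csat S M A \<longleftrightarrow> sat S A \<and> (\<forall>I. S \<inter> fst A \<subseteq> I \<and> I \<subseteq> M \<inter> fst A \<longrightarrow> I \<in> snd A)"

definition TP :: "'a program \<Rightarrow> 'a set \<Rightarrow> 'a set \<Rightarrow> 'a set" where
  "TP P S M = {a. \<exists>r\<in>P. head r = elem a \<and> (\<forall>B\<in>set (pos r). csat S M B)}"

primrec TP_iter :: "'a program \<Rightarrow> 'a set \<Rightarrow> nat \<Rightarrow> 'a set" where
  "TP_iter P M 0 = {}"
| "TP_iter P M (Suc i) = TP P (TP_iter P M i) M"

definition TP_inf :: "'a program \<Rightarrow> 'a set \<Rightarrow> 'a set" where
  "TP_inf P M = (\<Union>i. TP_iter P M i)"

definition answer_set_pos :: "'a program \<Rightarrow> 'a set \<Rightarrow> bool" where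
  "answer_set_pos P M \<longleftrightarrow> is_model M P \<and> M = TP_inf P M"

definition reduct :: "'a program \<Rightarrow> 'a set \<Rightarrow> 'a program" where
  "reduct P M = {Rule (head r) (pos r) [] | r. r \<in> P \<and> (\<forall>A\<in>set (neg r). \<not> sat M A)}"

definition answer_set_by_reduct :: "'a program \<Rightarrow> 'a set \<Rightarrow> bool" where
  "answer_set_by_reduct P M \<longleftrightarrow> answer_set_pos (reduct P M) M"

text \<open>Level mappings. H(X) = max of levels in X (0 for the empty set); taken as a
supremum in enat so that it is also meaningful for infinite X (it coincides with
the maximum whenever the maximum exists).\<close>
definition Hlev :: "('a \<Rightarrow> nat) \<Rightarrow> 'a set \<Rightarrow> enat" where
  "Hlev l X = Sup ((\<lambda>a. enat (l a)) ` X)"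

definition Lset :: "('a \<Rightarrow> nat) \<Rightarrow> 'a catom \<Rightarrow> 'a set \<Rightarrow> enat set" where
  "Lset l A M = {Hlev l X | X. X \<in> snd A \<and> X \<subseteq> M \<and> csat X M A}"

text \<open>L(A,M) is defined iff Lset is nonempty, and then equals its minimum.\<close>
definition Llev :: "('a \<Rightarrow> nat) \<Rightarrow> 'a catom \<Rightarrow> 'a set \<Rightarrow> enat" where
  "Llev l A M = Inf (Lset l A M)"

definition weakly_well_supported :: "'a program \<Rightarrow> 'a set \<Rightarrow> bool" where
  "weakly_well_supported P M \<longleftrightarrow> is_model M P \<and>
     (\<exists>l :: 'a \<Rightarrow> nat. (\<forall>a\<in>M. 1 \<le> l a) \<and>
        (\<forall>b\<in>M. \<exists>r\<in>P. head r = elem b \<and> body_sat M r \<and>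
            (\<forall>A\<in>set (pos r). Lset l A M \<noteq> {} \<and> Llev l A M < enat (l b))))"

end

theory Submission
  imports Defs
begin

lemma csat_mono:
  assumes "csat S M B" "S \<inter> fst B \<subseteq> S' \<inter> fst B" "S' \<inter> fst B \<subseteq> M \<inter> fst B"
  shows "csat S' M B"
proof -
  have a1: "S \<inter> fst B \<in> snd B" and
    a2: "\<And>I. S \<inter> fst B \<subseteq> I \<Longrightarrow> I \<subseteq> M \<inter> fst B \<Longrightarrow> I \<in> snd B"
    using assms(1) unfolding csat_def sat_def by auto
  have "S' \<inter> fst B \<in> snd B" using a2[OF assms(2) assms(3)] .
  moreover have "\<forall>I. S' \<inter> fst B \<subseteq> I \<and> I \<subseteq> M \<inter> fst B \<longrightarrow> I \<in> snd B"
  proof (intro allI impI)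
    fix I assume "S' \<inter> fst B \<subseteq> I \<and> I \<subseteq> M \<inter> fst B"
    then show "I \<in> snd B" using a2 assms(2) by (meson order_trans)
  qed
  ultimately show ?thesis unfolding csat_def sat_def by simp
qed

lemma csat_sat:
  assumes "csat S M B" "S \<subseteq> M" shows "sat M B"
proof -
  have "S \<inter> fst B \<subseteq> M \<inter> fst B" using assms(2) by blast
  then show ?thesis using assms(1) unfolding csat_def sat_def by simp
qed

lemma reduct_D:
  "r' \<in> reduct P M \<Longrightarrow> \<exists>r\<in>P. r' = Rule (head r) (pos r) [] \<and> (\<forall>A\<in>set (neg r). \<not> sat M A)"
  unfolding reduct_def by blast

lemma reduct_I:
  "r \<in> P \<Longrightarrow> (\<forall>A\<in>set (neg r). \<not> sat M A) \<Longrightarrow> Rule (head r) (pos r) [] \<in> reduct P M"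
  unfolding reduct_def by blast

lemma model_reduct: "is_model M (reduct P M) \<longleftrightarrow> is_model M P"
proof
  assume h: "is_model M (reduct P M)"
  show "is_model M P" unfolding is_model_def
  proof
    fix r assume r: "r \<in> P"
    show "rule_sat M r"
    proof (cases "\<forall>A\<in>set (neg r). \<not> sat M A")
      case True
      then have "Rule (head r) (pos r) [] \<in> reduct P M" using reduct_I r by blast
      then have "rule_sat M (Rule (head r) (pos r) [])" using h is_model_def by blast
      then show ?thesis using True unfolding rule_sat_def body_sat_def by auto
    next
      case False then show ?thesis unfolding rule_sat_def body_sat_def by auto
    qed
  qed
next
  assume h: "is_model M P"
  show "is_model M (reduct P M)" unfolding is_model_def
  proof
    fix r' assume "r' \<in> reduct P M"
    then obtain r where r: "r \<in> P" "r' = Rule (head r) (pos r) []" "\<forall>A\<in>set (neg r). \<not> sat M A"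
      using reduct_D by blast
    then have "rule_sat M r" using h is_model_def by blast
    then show "rule_sat M r'" using r unfolding rule_sat_def body_sat_def by auto
  qed
qed

lemma iter_sub:
  assumes "is_model M (reduct P M)"
  shows "TP_iter (reduct P M) M i \<subseteq> M"
proof (induction i)
  case 0 then show ?case by simp
next
  case (Suc j)
  show ?case
  proof
    fix a assume "a \<in> TP_iter (reduct P M) M (Suc j)"
    then obtain r where r: "r \<in> reduct P M" "head r = elem a"
      "\<forall>B\<in>set (pos r). csat (TP_iter (reduct P M) M j) M B"
      by (auto simp: TP_def)
    obtain r0 where r0: "r = Rule (head r0) (pos r0) []" using reduct_D[OF r(1)] by blast
    have "\<forall>B\<in>set (pos r). sat M B" using r(3) csat_sat Suc by blast
    then have "body_sat M r" using r0 unfolding body_sat_def by (metis empty_iff list.set(1) rule.sel(3))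
    then have "sat M (head r)" using assms r(1) unfolding is_model_def rule_sat_def by blast
    then show "a \<in> M" using r(2) unfolding sat_def elem_def by auto
  qed
qed

lemma inner:
  fixes l :: "'a \<Rightarrow> nat"
  assumes cat: "is_catom A" and ne: "Lset l A M \<noteq> {}" and lt: "Llev l A M < enat (l b)"
    and lb: "l b \<le> Suc n" and IH: "\<forall>b\<in>M. l b \<le> n \<longrightarrow> b \<in> S" and SM: "S \<subseteq> M"
  shows "csat S M A"
proof -
  obtain k where "k \<in> Lset l A M" using ne by blast
  then have "Llev l A M \<in> Lset l A M" unfolding Llev_def by (rule wellorder_InfI[of k])
  then have "\<exists>X. Llev l A M = Hlev l X \<and> X \<in> snd A \<and> X \<subseteq> M \<and> csat X M A"
    unfolding Lset_def mem_Collect_eq .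
  then obtain X where X: "Llev l A M = Hlev l X" "X \<in> snd A" "X \<subseteq> M" "csat X M A"
    by blast
  have Xd: "X \<subseteq> fst A" using subsetD[OF cat[unfolded is_catom_def] X(2)] by simp
  have XS: "X \<subseteq> S"
  proof
    fix a assume a: "a \<in> X"
    have "enat (l a) \<le> Hlev l X" unfolding Hlev_def using a by (intro Sup_upper) blast
    then have "enat (l a) < enat (l b)" using X(1) lt by (metis le_less_trans)
    then have "l a \<le> n" using lb by simp
    moreover have "a \<in> M" using a X(3) by blast
    ultimately show "a \<in> S" using IH by blast
  qed
  show "csat S M A"
    by (rule csat_mono[OF X(4)]) (use XS Xd SM in blast)+
qed

theorem proposition5:
  fixes P :: "('a::countable) program" and M :: "'a set"
  assumes "basic P"
    and "\<forall>r\<in>P. \<forall>A\<in>rule_catoms r. is_catom A"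
  shows "answer_set_by_reduct P M \<longleftrightarrow> weakly_well_supported P M"
proof
  assume "answer_set_by_reduct P M"
  then have mod: "is_model M (reduct P M)" and eq: "M = TP_inf (reduct P M) M"
    unfolding answer_set_by_reduct_def answer_set_pos_def by auto
  define R where "R = reduct P M"
  have sub: "\<And>i. TP_iter R M i \<subseteq> M"
  proof -
    fix i
    have "TP_iter R M i \<subseteq> TP_inf R M" unfolding TP_inf_def by blast
    then show "TP_iter R M i \<subseteq> M" using equalityD2[OF eq] unfolding R_def by (rule order_trans)
  qed
  define l where "l = (\<lambda>a. LEAST i. a \<in> TP_iter R M i)"
  have inM: "\<And>a. a \<in> M \<Longrightarrow> \<exists>i. a \<in> TP_iter R M i"
  proof -
    fix a assume "a \<in> M"
    then have "a \<in> TP_inf (reduct P M) M" using equalityD1[OF eq] by (rule subsetD[rotated])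
    then show "\<exists>i. a \<in> TP_iter R M i" unfolding TP_inf_def R_def by blast
  qed
  have lin: "\<And>a. a \<in> M \<Longrightarrow> a \<in> TP_iter R M (l a)"
    unfolding l_def using inM by (meson LeastI_ex)
  have lle: "\<And>a i. a \<in> TP_iter R M i \<Longrightarrow> l a \<le> i"
    unfolding l_def by (simp add: Least_le)
  have lpos: "\<And>a. a \<in> M \<Longrightarrow> 1 \<le> l a"
  proof -
    fix a assume "a \<in> M"
    then have "a \<in> TP_iter R M (l a)" by (rule lin)
    then have "l a \<noteq> 0" by (metis TP_iter.simps(1) empty_iff)
    then show "1 \<le> l a" by simp
  qed
  show "weakly_well_supported P M"
    unfolding weakly_well_supported_def
  proof (intro conjI exI[of _ l] ballI)
    show "is_model M P" using mod model_reduct by blast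
    fix a assume "a \<in> M" then show "1 \<le> l a" using lpos by blast
  next
    fix b assume b: "b \<in> M"
    obtain j where j: "l b = Suc j" using lpos[OF b] not0_implies_Suc by force
    have "b \<in> TP R (TP_iter R M j) M" using lin[OF b] j by simp
    then obtain r where r: "r \<in> R" "head r = elem b" "\<forall>B\<in>set (pos r). csat (TP_iter R M j) M B"
      unfolding TP_def by auto
    obtain r0 where r0: "r0 \<in> P" "r = Rule (head r0) (pos r0) []" "\<forall>A\<in>set (neg r0). \<not> sat M A"
      using reduct_D r(1) R_def by blast
    show "\<exists>r\<in>P. head r = elem b \<and> body_sat M r \<and>
            (\<forall>A\<in>set (pos r). Lset l A M \<noteq> {} \<and> Llev l A M < enat (l b))"
    proof (intro bexI[OF _ r0(1)] conjI ballI)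
      show "head r0 = elem b" using r r0 by simp
      show "body_sat M r0" unfolding body_sat_def using r0 r(3) csat_sat[OF _ sub] by (metis rule.sel(2))
    next
      fix A assume A: "A \<in> set (pos r0)"
      let ?S = "TP_iter R M j"
      define X where "X = ?S \<inter> fst A"
      have cs: "csat ?S M A" using A r r0 by simp
      have XA: "X \<in> snd A" using cs unfolding csat_def sat_def X_def by blast
      have XM: "X \<subseteq> M" unfolding X_def using sub[of j] by blast
      have Xc: "csat X M A" using cs unfolding csat_def sat_def X_def by (simp add: Int_assoc)
      have "\<forall>a\<in>X. enat (l a) \<le> enat j" unfolding X_def using lle by simp
      then have H: "Hlev l X \<le> enat j"
        unfolding Hlev_def by (intro Sup_least) blast
      have mem: "Hlev l X \<in> Lset l A M" unfolding Lset_def using XA XM Xc by blast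
      show "Lset l A M \<noteq> {}" using mem by blast
      have "Llev l A M \<le> Hlev l X" unfolding Llev_def using mem by (rule Inf_lower)
      also have "\<dots> < enat (l b)" using H j by (metis enat_ord_simps(2) le_less_trans lessI)
      finally show "Llev l A M < enat (l b)" .
    qed
  qed
next
  assume w: "weakly_well_supported P M"
  then have modP: "is_model M P" unfolding weakly_well_supported_def by blast
  then have mod: "is_model M (reduct P M)" using model_reduct by blast
  define R where "R = reduct P M"
  have sub: "\<And>i. TP_iter R M i \<subseteq> M" using iter_sub[OF mod] R_def by simp
  obtain l where l1: "\<forall>a\<in>M. 1 \<le> l a" and
    l2: "\<forall>b\<in>M. \<exists>r\<in>P. head r = elem b \<and> body_sat M r \<and>
            (\<forall>A\<in>set (pos r). Lset l A M \<noteq> {} \<and> Llev l A M < enat (l b))"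
    using w unfolding weakly_well_supported_def by blast
  have key: "\<forall>b\<in>M. l b \<le> n \<longrightarrow> b \<in> TP_iter R M n" for n
  proof (induction n)
    case 0
    show ?case
    proof (intro ballI impI)
      fix b assume "b \<in> M" "l b \<le> 0"
      then show "b \<in> TP_iter R M 0" using l1 by fastforce
    qed
  next
    case (Suc n)
    show ?case
    proof (intro ballI impI)
      fix b assume b: "b \<in> M" "l b \<le> Suc n"
      obtain r where r: "r \<in> P" "head r = elem b" "body_sat M r"
        "\<forall>A\<in>set (pos r). Lset l A M \<noteq> {} \<and> Llev l A M < enat (l b)"
        using l2 b(1) by blast
      have negs: "\<forall>A\<in>set (neg r). \<not> sat M A" using r(3) unfolding body_sat_def by blast
      have rR: "Rule (head r) (pos r) [] \<in> R" using reduct_I[OF r(1) negs] R_def by simp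
      let ?S = "TP_iter R M n"
      have SM: "?S \<subseteq> M" by (rule sub)
      have "\<forall>A\<in>set (pos r). csat ?S M A"
      proof
        fix A assume A: "A \<in> set (pos r)"
        have cat: "is_catom A" using assms(2) r(1) A unfolding rule_catoms_def by blast
        have ne: "Lset l A M \<noteq> {}" and lt: "Llev l A M < enat (l b)" using r(4) A by auto
        show "csat ?S M A" by (rule inner[OF cat ne lt b(2) Suc SM])
      qed
      then have "b \<in> TP R ?S M" unfolding TP_def using rR r(2)
        by (intro CollectI bexI[OF _ rR]) simp
      then show "b \<in> TP_iter R M (Suc n)" by simp
    qed
  qed
  have "M = TP_inf R M"
  proof
    show "M \<subseteq> TP_inf R M"
    proof
      fix b assume "b \<in> M"
      then have "b \<in> TP_iter R M (l b)" using key[of "l b"] by blast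
      then show "b \<in> TP_inf R M" unfolding TP_inf_def by blast
    qed
    show "TP_inf R M \<subseteq> M" unfolding TP_inf_def using sub by blast
  qed
  then have "M = TP_inf (reduct P M) M" unfolding R_def .
  then show "answer_set_by_reduct P M"
    unfolding answer_set_by_reduct_def answer_set_pos_def using mod by (intro conjI)
qed

end
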